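(* Let $b\in\mathbb B^d$ be fixed, $T>0$, and let $\phi_T$ and $G_T$ be the modified corrector and the Green's function. Then, as functions of $a\in\Omega$, $$\frac{\partial\phi_T(x=0)}{\partial a(b)}=-\nabla G_T(b,0)\big(\nabla\phi_T(b)+e(b)\big),$$ $$\frac{\partial}{\partial a(b)}\frac{\partial\phi_T(x=0)}{\partial a(b)}=-2\,\nabla\nabla G_T(b,b)\,\frac{\partial\phi_T(x=0)}{\partial a(b)},\qquad \frac{\partial}{\partial a(b)}\nabla\nabla G_T(b,b)=-\big(\nabla\nabla G_T(b,b)\big)^2.$$ Moreover, $\nabla\nabla G_T(b,b)>0$ and $1-a(b)\nabla\nabla G_T(b,b)>0$.
   Context: $\mathbb B^d$ is the set of nearest-neighbour bonds of $\mathbb Z^d$; $x_b,y_b$ endpoints of $b$ with $y_b-x_b\in\{e_1,\dots,e_d\}$; $\nabla u(b)=u(y_b)-u(x_b)$, $\nabla^*F(x)=\sum_i(F(\{x-e_i,x\})-F(\{x,x+e_i\}))$; $e\in\mathbb R^d$ is a fixed unit vector and $e(b)=e\cdot(y_b-x_b)$. $\Omega=[0,1]^{\mathbb B^d}$. The Green's function: for $a\in\Omega$ and $y\in\mathbb Z^d$, $x\mapsto G_T(a,x,y)$ is the unique $\ell^2(\mathbb Z^d)$ solution of $\frac1TG_T(a,\cdot,y)+\nabla^*(a\nabla G_T(a,\cdot,y))=\delta(\cdot-y)$. $\nabla G_T(b,0)$ is the gradient in the first variable at $b$ with $y=0$, and $\nabla\nabla G_T(b,b')=G_T(y_b,y_{b'})-G_T(x_b,y_{b'})-G_T(y_b,x_{b'})+G_T(x_b,x_{b'})$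 (gradient in both variables). The modified corrector $\phi_T(a,x)$ is the stationary (i.e. $\phi_T(a(\cdot+z),x)=\phi_T(a,x+z)$) field with finite second moment solving $\frac1T\phi_T+\nabla^*(a(\nabla\phi_T+e))=0$ for all $x\in\mathbb Z^d$ and $a\in\Omega$. $\partial/\partial a(b)$ denotes the classical partial derivative with respect to the coordinate $a(b)$ (all other coordinates fixed). *)

theory Defs
  imports "HOL-Analysis.Analysis"
begin

text \<open>Lattice points of Z^d are vectors int^'d (d = CARD('d)).
  A nearest-neighbour bond b = {x, x + e_i} is encoded as the pair (x, i), so that
  x_b = x and y_b = x + e_i.\<close>

type_synonym 'd point = "int ^ 'd"
type_synonym 'd bond = "'d point \<times> 'd"

definition unitv :: "'d::finite \<Rightarrow> 'd point" where
  "unitv i = (\<chi> j. if j = i then 1 else 0)"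

definition xb :: "'d::finite bond \<Rightarrow> 'd point" where
  "xb b = fst b"

definition yb :: "'d::finite bond \<Rightarrow> 'd point" where
  "yb b = fst b + unitv (snd b)"

definition grad :: "('d::finite point \<Rightarrow> real) \<Rightarrow> 'd bond \<Rightarrow> real" where
  "grad u b = u (yb b) - u (xb b)"

definition nabla_star :: "('d::finite bond \<Rightarrow> real) \<Rightarrow> 'd point \<Rightarrow> real" where
  "nabla_star F x = (\<Sum>i\<in>UNIV. F (x - unitv i, i) - F (x, i))"

text \<open>e(b) = e . (y_b - x_b) for a fixed vector e.\<close>
definition ebond :: "real ^ 'd \<Rightarrow> 'd::finite bond \<Rightarrow> real" where
  "ebond e b = e $ snd b"

definition Omega :: "('d::finite bond \<Rightarrow> real) set" where
  "Omega = {a. \<forall>b. 0 \<le> a b \<and> a b \<le> 1}"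

definition shift_coeff :: "'d::finite point \<Rightarrow> ('d bond \<Rightarrow> real) \<Rightarrow> ('d bond \<Rightarrow> real)" where
  "shift_coeff z a = (\<lambda>b. a (fst b + z, snd b))"

definition green :: "real \<Rightarrow> ('d::finite bond \<Rightarrow> real) \<Rightarrow> 'd point \<Rightarrow> 'd point \<Rightarrow> real" where
  "green T a y = (THE u. (\<lambda>x. (u x)\<^sup>2) summable_on UNIV \<and>
      (\<forall>x. u x / T + nabla_star (\<lambda>b. a b * grad u b) x = (if x = y then 1 else 0)))"

definition gradG :: "real \<Rightarrow> ('d::finite bond \<Rightarrow> real) \<Rightarrow> 'd bond \<Rightarrow> real" where
  "gradG T a b = grad (green T a 0) b"

text \<open>\<nabla>\<nabla>G_T(b,b'), gradient in both variables; green T a y x = G_T(a,x,y).\<close>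
definition hessG :: "real \<Rightarrow> ('d::finite bond \<Rightarrow> real) \<Rightarrow> 'd bond \<Rightarrow> 'd bond \<Rightarrow> real" where
  "hessG T a b b' = green T a (yb b') (yb b) - green T a (yb b') (xb b)
                  - green T a (xb b') (yb b) + green T a (xb b') (xb b)"

text \<open>Characterisation of the modified corrector: stationary, (deterministically) of
  finite size (bounded in x for each a), solving (1/T) phi + \<nabla>^*(a(\<nabla>phi + e)) = 0
  for all x and all a in Omega.\<close>
definition is_mod_corrector ::
  "real \<Rightarrow> real ^ 'd \<Rightarrow> (('d::finite bond \<Rightarrow> real) \<Rightarrow> 'd point \<Rightarrow> real) \<Rightarrow> bool" where
  "is_mod_corrector T e phi \<longleftrightarrow>
     (\<forall>a\<in>Omega. \<forall>x z. phi (shift_coeff z a) x = phi a (x + z)) \<and>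
     (\<forall>a\<in>Omega. bounded (range (phi a))) \<and>
     (\<forall>a\<in>Omega. \<forall>x. phi a x / T
        + nabla_star (\<lambda>b. a b * (grad (phi a) b + ebond e b)) x = 0)"

end

theory Submission
  imports Defs
begin


lemma unitv_self: "unitv i $ i = (1::int)" by (simp add: unitv_def)
lemma unitv_nz: "unitv i \<noteq> (0::'d::finite point)"
  by (metis unitv_self zero_index zero_neq_one)
lemma yb_ne_xb: "yb b \<noteq> xb (b::'d::finite bond)"
  unfolding yb_def xb_def using unitv_nz by auto

definition Lop :: "('d::finite bond \<Rightarrow> real) \<Rightarrow> ('d point \<Rightarrow> real) \<Rightarrow> 'd point \<Rightarrow> real" where
  "Lop a u x = nabla_star (\<lambda>b. a b * grad u b) x"

lemma Lop_expand: "Lop a u x = (\<Sum>i\<in>UNIV. a (x - unitv i, i) * (u x - u (x - unitv i))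
      - a (x, i) * (u (x + unitv i) - u x))"
  unfolding Lop_def nabla_star_def grad_def yb_def xb_def by simp

lemma nabla_star_add: "nabla_star (\<lambda>b. F b + G b) x = nabla_star F x + nabla_star G x"
  unfolding nabla_star_def sum.distrib[symmetric] by (rule sum.cong) auto

lemma nabla_star_delta: "nabla_star (\<lambda>b'. if b' = b then k else 0) x
   = k * ((if x = yb b then 1 else 0) - (if x = xb b then 1 else 0))"
proof -
  have "nabla_star (\<lambda>b'. if b' = b then k else 0) x
     = (\<Sum>i\<in>UNIV. (if i = snd b then (if x - unitv (snd b) = fst b then k else 0) - (if x = fst b then k else 0) else 0))"
    unfolding nabla_star_def by (rule sum.cong) (auto simp: prod_eq_iff)
  also have "\<dots> = (if x - unitv (snd b) = fst b then k else 0) - (if x = fst b then k else 0)"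
    by simp
  also have "\<dots> = k * ((if x = yb b then 1 else 0) - (if x = xb b then 1 else 0))"
    unfolding yb_def xb_def by (auto simp: algebra_simps)
  finally show ?thesis .
qed

definition wb :: "'d::finite bond \<Rightarrow> 'd point \<Rightarrow> real" where
  "wb b x = (if x = yb b then 1 else 0) - (if x = xb b then 1 else 0)"

lemma nabla_star_upd: "nabla_star (\<lambda>b'. (a(b:=t)) b' * h b') x
   = nabla_star (\<lambda>b'. a b' * h b') x + (t - a b) * h b * wb b x"
proof -
  have "(\<lambda>b'. (a(b:=t)) b' * h b') = (\<lambda>b'. a b' * h b' + (if b' = b then (t - a b) * h b else 0))"
    by (auto simp: algebra_simps)
  thus ?thesis by (simp add: nabla_star_add nabla_star_delta wb_def)
qed

lemma Lop_upd: "Lop (a(b:=t)) u x = Lop a u x + (t - a b) * grad u b * wb b x"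
  unfolding Lop_def by (rule nabla_star_upd)

lemma Lop_lin: "Lop a (\<lambda>x. u x - k * v x) z = Lop a u z - k * Lop a v z"
  unfolding Lop_expand sum_distrib_left sum_subtractf[symmetric] by (rule sum.cong) (auto simp: algebra_simps)
lemma Lop_minus: "Lop a (\<lambda>x. - u x) z = - Lop a u z"
  unfolding Lop_expand sum_negf[symmetric] by (rule sum.cong) (auto simp: algebra_simps)
lemma Lop_zero: "Lop a (\<lambda>x. 0) z = 0"
  unfolding Lop_expand by simp

lemma grad_lin: "grad (\<lambda>x. u x - k * v x) b = grad u b - k * grad v b"
  unfolding grad_def by (simp add: algebra_simps)

lemma OmegaD: "a \<in> Omega \<Longrightarrow> 0 \<le> a b \<and> a b \<le> 1"
  unfolding Omega_def by (cases b) auto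

lemma Omega_upd: "a \<in> Omega \<Longrightarrow> t \<in> {0..1} \<Longrightarrow> a(b:=t) \<in> Omega"
  unfolding Omega_def by auto

lemma maxp_aux:
  fixes u :: "'d::finite point \<Rightarrow> real"
  assumes T: "T>0" and a: "a \<in> Omega" and B: "\<And>x. \<bar>u x\<bar> \<le> B"
    and eq: "\<And>x. u x / T + Lop a u x = 0"
  shows "u x \<le> 0"
proof (rule ccontr)
  assume ux: "\<not> u x \<le> 0"
  define M where "M = Sup (range u)"
  have bdd: "bdd_above (range u)" using B by (auto intro!: bdd_aboveI[of _ B] simp: abs_le_iff)
  have uleM: "\<And>y. u y \<le> M" unfolding M_def using bdd by (auto intro: cSup_upper)
  have Mpos: "M > 0" using uleM[of x] ux by linarith
  define d where "d = real CARD('d)"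
  have d0: "d \<ge> 0" unfolding d_def by simp
  define \<epsilon> where "\<epsilon> = M / (2*(1+2*d*T))"
  have den: "2*(1+2*d*T) > 0" using d0 T by (simp add: add_pos_nonneg)
  have eps: "\<epsilon> > 0" unfolding \<epsilon>_def using Mpos den by simp
  obtain z where z: "M - \<epsilon> < u z"
    using less_cSup_iff[of "range u" "M - \<epsilon>"] bdd eps unfolding M_def[symmetric] by auto
  have trm: "c * (u z - u w) \<ge> - \<epsilon>" if "0 \<le> c" "c \<le> 1" for c w
  proof -
    have "u z - u w > - \<epsilon>" using z uleM[of w] by linarith
    hence "c * (u z - u w) \<ge> c * (- \<epsilon>)" using that by (intro mult_left_mono) auto
    moreover have "c * (- \<epsilon>) \<ge> - \<epsilon>" using that eps by (simp add: mult_left_le_one_le)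
    ultimately show ?thesis by linarith
  qed
  have aa: "0 \<le> a b' \<and> a b' \<le> 1" for b' using OmegaD[OF a] by auto
  have "Lop a u z = (\<Sum>i\<in>UNIV. a (z - unitv i, i) * (u z - u (z - unitv i))
      + a (z, i) * (u z - u (z + unitv i)))"
    unfolding Lop_expand by (simp add: algebra_simps)
  also have "\<dots> \<ge> (\<Sum>i\<in>(UNIV::'d set). - 2 * \<epsilon>)"
  proof (rule sum_mono)
    fix i
    have 1: "a (z - unitv i, i) * (u z - u (z - unitv i)) \<ge> - \<epsilon>"
      using aa[of "(z - unitv i, i)"] by (intro trm) auto
    have 2: "a (z, i) * (u z - u (z + unitv i)) \<ge> - \<epsilon>"
      using aa[of "(z, i)"] by (intro trm) auto
    show "- 2 * \<epsilon> \<le> a (z - unitv i, i) * (u z - u (z - unitv i)) + a (z, i) * (u z - u (z + unitv i))"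
      using 1 2 by linarith
  qed
  finally have L: "Lop a u z \<ge> - 2 * \<epsilon> * d" unfolding d_def by (simp add: algebra_simps)
  have "u z = - T * Lop a u z" using eq[of z] T by (simp add: field_simps)
  also have "\<dots> = T * (- Lop a u z)" by simp
  also have "\<dots> \<le> T * (2 * \<epsilon> * d)" using L T by (intro mult_left_mono) auto
  also have "\<dots> = 2 * \<epsilon> * d * T" by simp
  finally have "M < \<epsilon> * (1 + 2 * d * T)" using z by (simp add: algebra_simps)
  also have "\<dots> = M / 2" unfolding \<epsilon>_def using den by (simp add: field_simps)
  finally show False using Mpos by simp
qed

lemma maxp:
  fixes u :: "'d::finite point \<Rightarrow> real"
  assumes T: "T>0" and a: "a \<in> Omega" and B: "\<And>x. \<bar>u x\<bar> \<le> B"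
    and eq: "\<And>x. u x / T + Lop a u x = 0"
  shows "u x = 0"
proof -
  have "u x \<le> 0" by (rule maxp_aux[OF T a B eq])
  moreover have "- u x \<le> 0"
    by (rule maxp_aux[OF T a, of "\<lambda>x. - u x" B]) (use B eq in \<open>auto simp: Lop_minus add_eq_0_iff\<close>)
  ultimately show ?thesis by simp
qed

lemma uniq:
  fixes u v :: "'d::finite point \<Rightarrow> real"
  assumes T: "T>0" and a: "a \<in> Omega" and Bu: "\<And>x. \<bar>u x\<bar> \<le> B1" and Bv: "\<And>x. \<bar>v x\<bar> \<le> B2"
    and eu: "\<And>x. u x / T + Lop a u x = f x" and ev: "\<And>x. v x / T + Lop a v x = f x"
  shows "u x = v x"
proof -
  have "u x - 1 * v x = 0"
  proof (rule maxp[OF T a, of "\<lambda>x. u x - 1 * v x" "B1 + B2"])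
    show "\<bar>u y - 1 * v y\<bar> \<le> B1 + B2" for y using Bu[of y] Bv[of y] by linarith
    show "(u y - 1 * v y) / T + Lop a (\<lambda>x. u x - 1 * v x) y = 0" for y
      unfolding Lop_lin using eu[of y] ev[of y] by (simp add: diff_divide_distrib)
  qed
  thus ?thesis by simp
qed



definition l1 :: "('a \<Rightarrow> real) \<Rightarrow> bool" where
  "l1 u \<longleftrightarrow> (\<lambda>x. \<bar>u x\<bar>) summable_on UNIV"

lemma l1_summable: "l1 u \<Longrightarrow> u summable_on UNIV"
proof -
  assume "l1 u" hence "(\<lambda>x. norm (u x)) summable_on UNIV" unfolding l1_def by simp
  thus ?thesis by (rule abs_summable_summable)
qed

lemma l1_le: "l1 u \<Longrightarrow> \<bar>u x\<bar> \<le> infsum (\<lambda>x. \<bar>u x\<bar>) UNIV"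
  unfolding l1_def using finite_sum_le_infsum[of "\<lambda>x. \<bar>u x\<bar>" UNIV "{x}"] by auto

lemma l1_bdd: assumes "l1 u" shows "\<exists>B. \<forall>x. \<bar>u x\<bar> \<le> B"
  using l1_le[OF assms] by blast

lemma l1_cmp: assumes "l1 u" "\<And>x. \<bar>v x\<bar> \<le> C * \<bar>u x\<bar>" shows "l1 v"
proof -
  have "(\<lambda>x. norm (C * \<bar>u x\<bar>)) summable_on UNIV"
  proof -
    have "(\<lambda>x. \<bar>C\<bar> * \<bar>u x\<bar>) summable_on UNIV"
      using assms(1) unfolding l1_def by (rule summable_on_cmult_right)
    thus ?thesis by (simp add: abs_mult)
  qed
  moreover have "norm (v x) \<le> norm (C * \<bar>u x\<bar>)" for x
  proof -
    have "\<bar>v x\<bar> \<le> C * \<bar>u x\<bar>" by (rule assms(2))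
    also have "\<dots> \<le> \<bar>C\<bar> * \<bar>u x\<bar>" by (intro mult_right_mono) auto
    finally show ?thesis by (simp add: abs_mult)
  qed
  ultimately have "(\<lambda>x. norm (v x)) summable_on UNIV"
    using Infinite_Sum.abs_summable_on_comparison_test[of "\<lambda>x. C * \<bar>u x\<bar>" UNIV v] by blast
  thus ?thesis unfolding l1_def by simp
qed

lemma sum_cmp: "l1 u \<Longrightarrow> (\<And>x. \<bar>v x\<bar> \<le> C * \<bar>u x\<bar>) \<Longrightarrow> v summable_on UNIV"
  using l1_cmp l1_summable by blast

lemma l1_add: "l1 u \<Longrightarrow> l1 v \<Longrightarrow> l1 (\<lambda>x. u x + v x)"
proof -
  assume "l1 u" "l1 v"
  hence "l1 (\<lambda>x. \<bar>u x\<bar> + \<bar>v x\<bar>)" unfolding l1_def by (simp add: summable_on_add)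
  thus ?thesis by (rule l1_cmp[where C=1]) auto
qed

lemma l1_lin: "l1 u \<Longrightarrow> l1 v \<Longrightarrow> l1 (\<lambda>x. u x - k * v x)"
proof -
  assume u: "l1 u" and v: "l1 v"
  have "l1 (\<lambda>x. \<bar>k\<bar> * \<bar>v x\<bar>)" using v unfolding l1_def by (simp add: summable_on_cmult_right abs_mult)
  hence "l1 (\<lambda>x. \<bar>u x\<bar> + \<bar>k\<bar> * \<bar>v x\<bar>)" using u l1_add unfolding l1_def by (simp add: summable_on_add)
  thus ?thesis
  proof (rule l1_cmp[where C=1])
    fix x show "\<bar>u x - k * v x\<bar> \<le> 1 * \<bar>\<bar>u x\<bar> + \<bar>k\<bar> * \<bar>v x\<bar>\<bar>"
      using abs_triangle_ineq4[of "u x" "k * v x"] by (simp add: abs_mult)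
  qed
qed

lemma bij_shift: "bij_betw (\<lambda>x::'a::ab_group_add. x + z) UNIV UNIV"
  by (rule bij_betwI[where g="\<lambda>x. x - z"]) auto

lemma infsum_shift: "infsum (\<lambda>x. f (x + z)) UNIV = infsum f (UNIV::'a::ab_group_add set)"
  by (rule infsum_reindex_bij_betw[OF bij_shift])

lemma l1_shift: "l1 u \<Longrightarrow> l1 (\<lambda>x. u (x + (z::'a::ab_group_add)))"
  unfolding l1_def using summable_on_reindex_bij_betw[OF bij_shift, of "\<lambda>x. \<bar>u x\<bar>" z] by simp

lemma infsum_diff: "f summable_on A \<Longrightarrow> g summable_on A \<Longrightarrow>
   infsum (\<lambda>x. f x - (g x::real)) A = infsum f A - infsum g A"
  using infsum_add[of f A "\<lambda>x. - g x"] summable_on_uminus[of g A] infsum_uminus[of g A] by simp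

lemma summable_finsum: "finite I \<Longrightarrow> (\<And>i. i \<in> I \<Longrightarrow> f i summable_on A) \<Longrightarrow>
   (\<lambda>x. \<Sum>i\<in>I. (f i x::real)) summable_on A"
  by (induction I rule: finite_induct) (auto intro!: summable_on_add)

lemma infsum_finsum: "finite I \<Longrightarrow> (\<And>i. i \<in> I \<Longrightarrow> f i summable_on A) \<Longrightarrow>
   infsum (\<lambda>x. \<Sum>i\<in>I. (f i x::real)) A = (\<Sum>i\<in>I. infsum (f i) A)"
proof (induction I rule: finite_induct)
  case (insert j I)
  thus ?case by (simp add: infsum_add summable_finsum)
qed simp

lemma infsum_delta: "infsum (\<lambda>x. u x * (if x = y then 1 else 0)) UNIV = (u y :: real)"
proof -
  have "infsum (\<lambda>x. u x * (if x = y then 1 else 0)) UNIV = infsum (\<lambda>x. u x * (if x = y then 1 else 0)) {y}"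
    by (rule infsum_cong_neutral) auto
  thus ?thesis by simp
qed


definition Dw :: "('d::finite bond \<Rightarrow> real) \<Rightarrow> 'd point \<Rightarrow> real" where
  "Dw a x = (\<Sum>i\<in>UNIV. a (x - unitv i, i) + a (x, i))"
definition Nw :: "('d::finite bond \<Rightarrow> real) \<Rightarrow> ('d point \<Rightarrow> real) \<Rightarrow> 'd point \<Rightarrow> real" where
  "Nw a u x = (\<Sum>i\<in>UNIV. a (x - unitv i, i) * u (x - unitv i) + a (x, i) * u (x + unitv i))"

lemma Lop_DN: "Lop a u x = Dw a x * u x - Nw a u x"
  unfolding Lop_expand Dw_def Nw_def sum_distrib_right sum_subtractf[symmetric]
  by (rule sum.cong) (auto simp: algebra_simps)

lemma Dw_bounds: fixes a :: "'d::finite bond \<Rightarrow> real" shows "a \<in> Omega \<Longrightarrow> 0 \<le> Dw a x \<and> Dw a x \<le> 2 * real CARD('d::finite)"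
proof -
  assume a: "a \<in> Omega"
  have "0 \<le> Dw a x" unfolding Dw_def using OmegaD[OF a] by (intro sum_nonneg) (simp add: add_nonneg_nonneg)
  moreover have "Dw a x \<le> (\<Sum>i\<in>(UNIV::'d set). 2)" unfolding Dw_def
  proof (rule sum_mono)
    fix i show "a (x - unitv i, i) + a (x, i) \<le> 2" using OmegaD[OF a, of "(x - unitv i, i)"] OmegaD[OF a, of "(x, i)"] by linarith
  qed
  ultimately show ?thesis by simp
qed

definition WB :: "real \<Rightarrow> ('d::finite bond \<Rightarrow> real) \<Rightarrow> ('d point \<Rightarrow> real) \<Rightarrow> real \<Rightarrow> bool" where
  "WB c a u K \<longleftrightarrow> (\<forall>F. finite F \<longrightarrow> (\<Sum>x\<in>F. (c + Dw a x) * \<bar>u x\<bar>) \<le> K)"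

lemma WB_step:
  fixes a :: "'d::finite bond \<Rightarrow> real"
  assumes a: "a \<in> Omega" and c: "c > 0" and W: "WB c a u K"
  shows "WB c a (\<lambda>x. Nw a u x / (c + Dw a x)) (2 * real CARD('d) / (c + 2 * real CARD('d)) * K)"
  unfolding WB_def
proof (intro allI impI)
  fix F :: "'d point set" assume F: "finite F"
  define n where "n = real CARD('d)"
  define q where "q = 2 * n / (c + 2 * n)"
  have n0: "n \<ge> 0" unfolding n_def by simp
  have aa: "\<And>b. 0 \<le> a b \<and> a b \<le> 1" using OmegaD[OF a] by blast
  have cD: "\<And>x. c + Dw a x > 0" using Dw_bounds[OF a] c by (simp add: add_pos_nonneg)
  define F' where "F' = (\<Union>i. (\<lambda>x. x - unitv i) ` F \<union> (\<lambda>x. x + unitv i) ` F)"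
  have fF': "finite F'" unfolding F'_def using F by auto
  have "(\<Sum>x\<in>F. (c + Dw a x) * \<bar>Nw a u x / (c + Dw a x)\<bar>) = (\<Sum>x\<in>F. \<bar>Nw a u x\<bar>)"
  proof (rule sum.cong)
    fix x show "(c + Dw a x) * \<bar>Nw a u x / (c + Dw a x)\<bar> = \<bar>Nw a u x\<bar>"
      using cD[of x] by (simp add: abs_div abs_of_pos)
  qed simp
  also have "\<dots> \<le> (\<Sum>x\<in>F. \<Sum>i\<in>UNIV. a (x - unitv i, i) * \<bar>u (x - unitv i)\<bar> + a (x, i) * \<bar>u (x + unitv i)\<bar>)"
  proof (rule sum_mono)
    fix x
    have "\<bar>Nw a u x\<bar> \<le> (\<Sum>i\<in>UNIV. \<bar>a (x - unitv i, i) * u (x - unitv i) + a (x, i) * u (x + unitv i)\<bar>)"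
      unfolding Nw_def by (rule sum_abs)
    also have "\<dots> \<le> (\<Sum>i\<in>UNIV. a (x - unitv i, i) * \<bar>u (x - unitv i)\<bar> + a (x, i) * \<bar>u (x + unitv i)\<bar>)"
      by (rule sum_mono) (use aa in \<open>auto simp: abs_mult intro!: order.trans[OF abs_triangle_ineq]\<close>)
    finally show "\<bar>Nw a u x\<bar> \<le> \<dots>" .
  qed
  also have "\<dots> = (\<Sum>i\<in>UNIV. (\<Sum>x\<in>F. a (x - unitv i, i) * \<bar>u (x - unitv i)\<bar>) + (\<Sum>x\<in>F. a (x, i) * \<bar>u (x + unitv i)\<bar>))"
    by (subst sum.swap) (simp only: sum.distrib)
  also have "\<dots> \<le> (\<Sum>i\<in>UNIV. (\<Sum>y\<in>F'. a (y, i) * \<bar>u y\<bar>) + (\<Sum>y\<in>F'. a (y - unitv i, i) * \<bar>u y\<bar>))"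
  proof (rule sum_mono)
    fix i
    have inj1: "inj_on (\<lambda>x. x - unitv i) F" by (auto simp: inj_on_def)
    have inj2: "inj_on (\<lambda>x. x + unitv i) F" by (auto simp: inj_on_def)
    have "(\<Sum>x\<in>F. a (x - unitv i, i) * \<bar>u (x - unitv i)\<bar>) = (\<Sum>y\<in>(\<lambda>x. x - unitv i) ` F. a (y, i) * \<bar>u y\<bar>)"
      by (simp add: sum.reindex[OF inj1])
    also have "\<dots> \<le> (\<Sum>y\<in>F'. a (y, i) * \<bar>u y\<bar>)"
      by (rule sum_mono2[OF fF']) (unfold F'_def, blast, simp add: aa)
    finally have 1: "(\<Sum>x\<in>F. a (x - unitv i, i) * \<bar>u (x - unitv i)\<bar>) \<le> (\<Sum>y\<in>F'. a (y, i) * \<bar>u y\<bar>)" .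
    have "(\<Sum>x\<in>F. a (x, i) * \<bar>u (x + unitv i)\<bar>) = (\<Sum>y\<in>(\<lambda>x. x + unitv i) ` F. a (y - unitv i, i) * \<bar>u y\<bar>)"
      by (simp add: sum.reindex[OF inj2])
    also have "\<dots> \<le> (\<Sum>y\<in>F'. a (y - unitv i, i) * \<bar>u y\<bar>)"
      by (rule sum_mono2[OF fF']) (unfold F'_def, blast, simp add: aa)
    finally show "(\<Sum>x\<in>F. a (x - unitv i, i) * \<bar>u (x - unitv i)\<bar>) + (\<Sum>x\<in>F. a (x, i) * \<bar>u (x + unitv i)\<bar>)
        \<le> (\<Sum>y\<in>F'. a (y, i) * \<bar>u y\<bar>) + (\<Sum>y\<in>F'. a (y - unitv i, i) * \<bar>u y\<bar>)" using 1 by linarith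
  qed
  also have "\<dots> = (\<Sum>y\<in>F'. Dw a y * \<bar>u y\<bar>)"
    unfolding Dw_def sum_distrib_right sum.distrib[symmetric]
    by (subst sum.swap) (rule sum.cong, simp, rule sum.cong, simp, simp add: algebra_simps)
  also have "\<dots> \<le> (\<Sum>y\<in>F'. q * ((c + Dw a y) * \<bar>u y\<bar>))"
  proof (rule sum_mono)
    fix y
    have D: "0 \<le> Dw a y" "Dw a y \<le> 2 * n" using Dw_bounds[OF a, of y] unfolding n_def by auto
    have "Dw a y \<le> q * (c + Dw a y)"
    proof -
      have "q * (c + Dw a y) - Dw a y = c * (2 * n - Dw a y) / (c + 2 * n)"
        unfolding q_def using c n0 by (simp add: field_simps)
      also have "\<dots> \<ge> 0" using D c n0 by (intro divide_nonneg_pos mult_nonneg_nonneg) auto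
      finally show ?thesis by simp
    qed
    thus "Dw a y * \<bar>u y\<bar> \<le> q * ((c + Dw a y) * \<bar>u y\<bar>)"
      by (metis abs_ge_zero mult.assoc mult_right_mono)
  qed
  also have "\<dots> = q * (\<Sum>y\<in>F'. (c + Dw a y) * \<bar>u y\<bar>)" by (simp add: sum_distrib_left)
  also have "\<dots> \<le> q * K"
    using W fF' unfolding WB_def q_def using c n0 by (intro mult_left_mono) auto
  finally show "(\<Sum>x\<in>F. (c + Dw a x) * \<bar>Nw a u x / (c + Dw a x)\<bar>) \<le> 2 * real CARD('d) / (c + 2 * real CARD('d)) * K"
    unfolding q_def n_def .
qed



fun itr :: "real \<Rightarrow> ('d::finite bond \<Rightarrow> real) \<Rightarrow> 'd point \<Rightarrow> nat \<Rightarrow> 'd point \<Rightarrow> real" where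
  "itr c a y 0 = (\<lambda>x. (if x = y then 1 else 0) / (c + Dw a x))"
| "itr c a y (Suc k) = (\<lambda>x. Nw a (itr c a y k) x / (c + Dw a x))"

lemma cD_pos: "a \<in> Omega \<Longrightarrow> c > 0 \<Longrightarrow> c + Dw a x > 0"
  using Dw_bounds[of a x] by (smt (verit))

lemma itr_WB:
  fixes a :: "'d::finite bond \<Rightarrow> real"
  assumes a: "a \<in> Omega" and c: "c > 0"
  shows "WB c a (itr c a y k) ((2 * real CARD('d) / (c + 2 * real CARD('d))) ^ k)"
proof (induction k)
  case 0
  show ?case unfolding WB_def
  proof (intro allI impI)
    fix F :: "'d point set" assume "finite F"
    have "(\<Sum>x\<in>F. (c + Dw a x) * \<bar>itr c a y 0 x\<bar>) = (\<Sum>x\<in>F. (if x = y then 1 else 0))"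
    proof (rule sum.cong)
      fix x show "(c + Dw a x) * \<bar>itr c a y 0 x\<bar> = (if x = y then 1 else 0)"
        using cD_pos[OF a c, of x] by (simp add: abs_div abs_of_pos)
    qed simp
    also have "\<dots> \<le> 1" using \<open>finite F\<close> by (simp add: sum.delta)
    finally show "(\<Sum>x\<in>F. (c + Dw a x) * \<bar>itr c a y 0 x\<bar>) \<le> (2 * real CARD('d) / (c + 2 * real CARD('d))) ^ 0" by simp
  qed
next
  case (Suc k)
  from WB_step[OF a c Suc] show ?case by simp
qed

lemma WB_pt: assumes a: "a \<in> Omega" and c: "c > 0" and W: "WB c a u K" shows "\<bar>u x\<bar> \<le> K / c"
proof -
  have "(c + Dw a x) * \<bar>u x\<bar> \<le> K" using W[unfolded WB_def, rule_format, of "{x}"] by simp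
  moreover have "c * \<bar>u x\<bar> \<le> (c + Dw a x) * \<bar>u x\<bar>" using Dw_bounds[OF a, of x] by (intro mult_right_mono) auto
  ultimately show ?thesis using c by (simp add: field_simps)
qed

lemma WB_fin: assumes a: "a \<in> Omega" and c: "c > 0" and W: "WB c a u K" and F: "finite F"
  shows "(\<Sum>x\<in>F. \<bar>u x\<bar>) \<le> K / c"
proof -
  have "(\<Sum>x\<in>F. c * \<bar>u x\<bar>) \<le> (\<Sum>x\<in>F. (c + Dw a x) * \<bar>u x\<bar>)"
    using Dw_bounds[OF a] by (intro sum_mono mult_right_mono) auto
  also have "\<dots> \<le> K" using W F unfolding WB_def by blast
  finally show ?thesis using c by (simp add: field_simps sum_distrib_left[symmetric])
qed

lemma exist:
  fixes a :: "'d::finite bond \<Rightarrow> real"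
  assumes T: "T > 0" and a: "a \<in> Omega"
  shows "\<exists>u. l1 u \<and> (\<forall>x. u x / T + Lop a u x = (if x = y then 1 else 0))"
proof -
  define c where "c = 1 / T"
  have c: "c > 0" unfolding c_def using T by simp
  define n where "n = real CARD('d)"
  define q where "q = 2 * n / (c + 2 * n)"
  have n0: "n \<ge> 0" unfolding n_def by simp
  have q0: "0 \<le> q" "q < 1" unfolding q_def using c n0 by (auto simp: field_simps)
  let ?it = "itr c a y"
  have W: "\<And>k. WB c a (?it k) (q ^ k)" unfolding q_def n_def by (rule itr_WB[OF a c])
  have pt: "\<And>k x. \<bar>?it k x\<bar> \<le> q ^ k / c" by (rule WB_pt[OF a c W])
  have gs: "summable (\<lambda>k. q ^ k / c)" by (intro summable_divide summable_geometric) (use q0 in auto)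
  have sa: "summable (\<lambda>k. \<bar>?it k x\<bar>)" for x by (rule summable_comparison_test'[OF gs]) (simp add: pt)
  have s: "summable (\<lambda>k. ?it k x)" for x by (rule summable_comparison_test'[OF gs]) (simp add: pt)
  define u where "u x = (\<Sum>k. ?it k x)" for x
  have su: "(\<lambda>k. ?it k x) sums u x" for x using s unfolding u_def by (simp add: summable_sums)
  have eq: "(c + Dw a x) * u x = (if x = y then 1 else 0) + Nw a u x" for x
  proof -
    have "(\<lambda>k. Nw a (?it k) x) sums Nw a u x"
      unfolding Nw_def by (intro sums_sum sums_add sums_mult su)
    moreover have "(\<lambda>k. (c + Dw a x) * ?it (Suc k) x) = (\<lambda>k. Nw a (?it k) x)"
      using cD_pos[OF a c, of x] by (simp add: fun_eq_iff)
    ultimately have "(\<lambda>k. (c + Dw a x) * ?it (Suc k) x) sums Nw a u x" by (simp only:)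
    hence A: "(\<lambda>k. (c + Dw a x) * ?it k x) sums (Nw a u x + (c + Dw a x) * ?it 0 x)"
      by (subst (asm) sums_Suc_iff)
    have B: "(\<lambda>k. (c + Dw a x) * ?it k x) sums ((c + Dw a x) * u x)" by (rule sums_mult[OF su])
    have C: "(c + Dw a x) * ?it 0 x = (if x = y then 1 else 0)" using cD_pos[OF a c, of x] by simp
    have "(c + Dw a x) * u x = Nw a u x + (c + Dw a x) * ?it 0 x" by (rule sums_unique2[OF B A])
    thus ?thesis unfolding C by simp
  qed
  have sol: "u x / T + Lop a u x = (if x = y then 1 else 0)" for x
  proof -
    have "u x / T = c * u x" unfolding c_def by simp
    thus ?thesis unfolding Lop_DN using eq[of x] by (simp add: algebra_simps)
  qed
  have "l1 u" unfolding l1_def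
  proof (rule nonneg_bdd_above_summable_on)
    show "bdd_above (sum (\<lambda>x. \<bar>u x\<bar>) ` {F. F \<subseteq> UNIV \<and> finite F})"
    proof (rule bdd_aboveI2)
      fix F assume "F \<in> {F. F \<subseteq> (UNIV::'d point set) \<and> finite F}"
      hence F: "finite F" by simp
      have "(\<Sum>x\<in>F. \<bar>u x\<bar>) \<le> (\<Sum>x\<in>F. \<Sum>k. \<bar>?it k x\<bar>)"
        unfolding u_def by (intro sum_mono summable_rabs sa)
      also have "\<dots> = (\<Sum>k. \<Sum>x\<in>F. \<bar>?it k x\<bar>)" by (rule suminf_sum[symmetric]) (rule sa)
      also have "\<dots> \<le> (\<Sum>k. q ^ k / c)"
        by (intro suminf_le summable_sum sa gs WB_fin[OF a c W F])
      finally show "(\<Sum>x\<in>F. \<bar>u x\<bar>) \<le> (\<Sum>k. q ^ k / c)" .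
    qed
  qed simp
  with sol show ?thesis by blast
qed



lemma l1_abs: "l1 u \<Longrightarrow> l1 (\<lambda>x. \<bar>u x\<bar>)" unfolding l1_def by simp

lemma bnd3: "\<bar>p\<bar> \<le> P \<Longrightarrow> 0 \<le> q \<Longrightarrow> q \<le> 1 \<Longrightarrow> \<bar>r\<bar> \<le> W \<Longrightarrow> \<bar>p * (q * (r::real))\<bar> \<le> P * W"
proof -
  assume h: "\<bar>p\<bar> \<le> P" "0 \<le> q" "q \<le> 1" "\<bar>r\<bar> \<le> W"
  have "\<bar>p * (q * r)\<bar> = \<bar>p\<bar> * (q * \<bar>r\<bar>)" using h(2) by (simp add: abs_mult)
  also have "\<dots> \<le> P * (1 * W)"
    using h by (intro mult_mono) (auto intro: mult_mono)
  finally show ?thesis by simp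
qed

lemma green_props:
  fixes a :: "'d::finite bond \<Rightarrow> real"
  assumes T: "T > 0" and a: "a \<in> Omega"
  shows "l1 (green T a y) \<and> (\<forall>x. green T a y x / T + Lop a (green T a y) x = (if x = y then 1 else 0))"
proof -
  obtain u where u: "l1 u" "\<And>x. u x / T + Lop a u x = (if x = y then 1 else 0)"
    using exist[OF T a] by blast
  obtain B where B: "\<And>x. \<bar>u x\<bar> \<le> B" using l1_bdd[OF u(1)] by blast
  have sq: "(\<lambda>x. (u x)\<^sup>2) summable_on UNIV"
  proof (rule sum_cmp[OF u(1), of _ B])
    fix x have "\<bar>(u x)\<^sup>2\<bar> = \<bar>u x\<bar> * \<bar>u x\<bar>" by (simp add: power2_eq_square abs_mult)
    also have "\<dots> \<le> B * \<bar>u x\<bar>" by (rule mult_right_mono[OF B]) simp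
    finally show "\<bar>(u x)\<^sup>2\<bar> \<le> B * \<bar>u x\<bar>" .
  qed
  have "green T a y = u" unfolding green_def
  proof (rule the_equality)
    show "(\<lambda>x. (u x)\<^sup>2) summable_on UNIV \<and> (\<forall>x. u x / T + nabla_star (\<lambda>b. a b * grad u b) x = (if x = y then 1 else 0))"
      using sq u(2) unfolding Lop_def by simp
  next
    fix w assume w: "(\<lambda>x. (w x)\<^sup>2) summable_on UNIV \<and> (\<forall>x. w x / T + nabla_star (\<lambda>b. a b * grad w b) x = (if x = y then 1 else 0))"
    have wb: "\<bar>w x\<bar> \<le> max 1 (infsum (\<lambda>x. (w x)\<^sup>2) UNIV)" for x
    proof -
      have "(\<Sum>z\<in>{x}. (w z)\<^sup>2) \<le> infsum (\<lambda>x. (w x)\<^sup>2) UNIV"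
        using w by (intro finite_sum_le_infsum) auto
      hence 1: "(w x)\<^sup>2 \<le> infsum (\<lambda>x. (w x)\<^sup>2) UNIV" by simp
      show ?thesis
      proof (cases "\<bar>w x\<bar> \<le> 1")
        case False
        hence "\<bar>w x\<bar> * 1 \<le> \<bar>w x\<bar> * \<bar>w x\<bar>" by (intro mult_left_mono) auto
        hence "\<bar>w x\<bar> \<le> \<bar>w x\<bar> * \<bar>w x\<bar>" by simp
        also have "\<dots> = (w x)\<^sup>2" by (simp add: power2_eq_square abs_mult[symmetric])
        finally show ?thesis using 1 by simp
      qed simp
    qed
    show "w = u"
    proof
      fix x show "w x = u x"
      proof (rule uniq[OF T a, where f="\<lambda>x. if x = y then 1 else 0"])
        show "\<bar>w z\<bar> \<le> max 1 (infsum (\<lambda>x. (w x)\<^sup>2) UNIV)" for z by (rule wb)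
        show "\<bar>u z\<bar> \<le> B" for z by (rule B)
        show "w z / T + Lop a w z = (if z = y then 1 else 0)" for z using w unfolding Lop_def by blast
        show "u z / T + Lop a u z = (if z = y then 1 else 0)" for z by (rule u(2))
      qed
    qed
  qed
  thus ?thesis using u by simp
qed

lemma green_l1: "T > 0 \<Longrightarrow> a \<in> Omega \<Longrightarrow> l1 (green T a y)" using green_props by blast
lemma green_eq: "T > 0 \<Longrightarrow> a \<in> Omega \<Longrightarrow> green T a y x / T + Lop a (green T a y) x = (if x = y then 1 else 0)"
  using green_props by blast

lemma bilin_i:
  fixes a :: "'d::finite bond \<Rightarrow> real" and i :: 'd
  assumes a: "a \<in> Omega" and u: "l1 u" and v: "l1 v"
  shows "(\<lambda>z. u z * (a (z - unitv i, i) * (v z - v (z - unitv i)) - a (z, i) * (v (z + unitv i) - v z))) summable_on UNIV"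
    and "infsum (\<lambda>z. u z * (a (z - unitv i, i) * (v z - v (z - unitv i)) - a (z, i) * (v (z + unitv i) - v z))) UNIV
       = infsum (\<lambda>x. a (x, i) * (u (x + unitv i) - u x) * (v (x + unitv i) - v x)) UNIV"
proof -
  obtain Bu where Bu: "\<And>x. \<bar>u x\<bar> \<le> Bu" using l1_bdd[OF u] by blast
  let ?e = "unitv i"
  have aa: "\<And>b. 0 \<le> a b \<and> a b \<le> 1" using OmegaD[OF a] by blast
  define w1 where "w1 z = \<bar>v z\<bar> + \<bar>v (z + - ?e)\<bar>" for z
  define w2 where "w2 z = \<bar>v (z + ?e)\<bar> + \<bar>v z\<bar>" for z
  have lw1: "l1 w1" unfolding w1_def by (intro l1_add l1_abs v l1_shift)
  have lw2: "l1 w2" unfolding w2_def by (intro l1_add l1_abs v l1_shift)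
  define f1 where "f1 z = u z * (a (z - ?e, i) * (v z - v (z - ?e)))" for z
  define f2 where "f2 z = u z * (a (z, i) * (v (z + ?e) - v z))" for z
  have s1: "f1 summable_on UNIV"
  proof (rule sum_cmp[OF lw1, of _ Bu])
    fix z show "\<bar>f1 z\<bar> \<le> Bu * \<bar>w1 z\<bar>" unfolding f1_def
      by (rule bnd3[OF Bu]) (use aa in \<open>auto simp: w1_def intro: order.trans[OF abs_triangle_ineq4]\<close>)
  qed
  have s2: "f2 summable_on UNIV"
  proof (rule sum_cmp[OF lw2, of _ Bu])
    fix z show "\<bar>f2 z\<bar> \<le> Bu * \<bar>w2 z\<bar>" unfolding f2_def
      by (rule bnd3[OF Bu]) (use aa in \<open>auto simp: w2_def intro: order.trans[OF abs_triangle_ineq4]\<close>)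
  qed
  have s1': "(\<lambda>x. f1 (x + ?e)) summable_on UNIV"
    using s1 summable_on_reindex_bij_betw[OF bij_shift, of f1 ?e] by simp
  show "(\<lambda>z. u z * (a (z - unitv i, i) * (v z - v (z - unitv i)) - a (z, i) * (v (z + unitv i) - v z))) summable_on UNIV"
    using summable_on_add[OF s1 summable_on_uminus[THEN iffD2, OF s2]] unfolding f1_def f2_def
    by (simp add: algebra_simps)
  have "infsum (\<lambda>z. u z * (a (z - unitv i, i) * (v z - v (z - unitv i)) - a (z, i) * (v (z + unitv i) - v z))) UNIV
      = infsum (\<lambda>z. f1 z - f2 z) UNIV" unfolding f1_def f2_def by (simp add: algebra_simps)
  also have "\<dots> = infsum f1 UNIV - infsum f2 UNIV" by (rule infsum_diff[OF s1 s2])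
  also have "infsum f1 UNIV = infsum (\<lambda>x. f1 (x + ?e)) UNIV" by (rule infsum_shift[symmetric])
  also have "infsum (\<lambda>x. f1 (x + ?e)) UNIV - infsum f2 UNIV = infsum (\<lambda>x. f1 (x + ?e) - f2 x) UNIV"
    by (rule infsum_diff[OF s1' s2, symmetric])
  also have "\<dots> = infsum (\<lambda>x. a (x, i) * (u (x + unitv i) - u x) * (v (x + unitv i) - v x)) UNIV"
    unfolding f1_def f2_def by (simp add: algebra_simps)
  finally show "infsum (\<lambda>z. u z * (a (z - unitv i, i) * (v z - v (z - unitv i)) - a (z, i) * (v (z + unitv i) - v z))) UNIV
       = infsum (\<lambda>x. a (x, i) * (u (x + unitv i) - u x) * (v (x + unitv i) - v x)) UNIV" .
qed

lemma pair:
  fixes a :: "'d::finite bond \<Rightarrow> real"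
  assumes a: "a \<in> Omega" and u: "l1 u" and v: "l1 v"
  shows "infsum (\<lambda>z. u z * (v z / T + Lop a v z)) UNIV = infsum (\<lambda>z. u z * v z) UNIV / T
     + (\<Sum>i\<in>UNIV. infsum (\<lambda>x. a (x, i) * (u (x + unitv i) - u x) * (v (x + unitv i) - v x)) UNIV)"
proof -
  obtain Bu where Bu: "\<And>x. \<bar>u x\<bar> \<le> Bu" using l1_bdd[OF u] by blast
  have suv: "(\<lambda>z. u z * v z) summable_on UNIV"
    by (rule sum_cmp[OF v, of _ Bu]) (simp add: abs_mult Bu mult_right_mono)
  let ?h = "\<lambda>i z. u z * (a (z - unitv i, i) * (v z - v (z - unitv i)) - a (z, i) * (v (z + unitv i) - v z))"
  have sh: "\<And>i. ?h i summable_on UNIV" using bilin_i(1)[OF a u v] .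
  have "infsum (\<lambda>z. u z * (v z / T + Lop a v z)) UNIV = infsum (\<lambda>z. (1/T) * (u z * v z) + (\<Sum>i\<in>UNIV. ?h i z)) UNIV"
    unfolding Lop_expand by (simp add: algebra_simps sum_distrib_left)
  also have "\<dots> = infsum (\<lambda>z. (1/T) * (u z * v z)) UNIV + infsum (\<lambda>z. \<Sum>i\<in>UNIV. ?h i z) UNIV"
  proof (rule infsum_add)
    show "(\<lambda>z. (1/T) * (u z * v z)) summable_on UNIV" by (rule summable_on_cmult_right[OF suv])
    show "(\<lambda>z. \<Sum>i\<in>UNIV. ?h i z) summable_on UNIV" by (rule summable_finsum) (auto intro: sh)
  qed
  also have "infsum (\<lambda>z. (1/T) * (u z * v z)) UNIV = infsum (\<lambda>z. u z * v z) UNIV / T"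
    by (subst infsum_cmult_right) (auto simp: suv)
  also have "infsum (\<lambda>z. \<Sum>i\<in>UNIV. ?h i z) UNIV = (\<Sum>i\<in>UNIV. infsum (?h i) UNIV)"
    by (rule infsum_finsum) (auto intro: sh)
  also have "\<dots> = (\<Sum>i\<in>UNIV. infsum (\<lambda>x. a (x, i) * (u (x + unitv i) - u x) * (v (x + unitv i) - v x)) UNIV)"
    by (rule sum.cong) (auto simp: bilin_i(2)[OF a u v])
  finally show ?thesis .
qed

lemma green_sym:
  fixes a :: "'d::finite bond \<Rightarrow> real"
  assumes T: "T > 0" and a: "a \<in> Omega"
  shows "green T a y x = green T a x y"
proof -
  let ?Gx = "green T a x" and ?Gy = "green T a y"
  have lx: "l1 ?Gx" and ly: "l1 ?Gy" using green_l1[OF T a] by auto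
  have "?Gx y = infsum (\<lambda>z. ?Gx z * (?Gy z / T + Lop a ?Gy z)) UNIV"
    by (simp add: green_eq[OF T a] infsum_delta)
  also have "\<dots> = infsum (\<lambda>z. ?Gy z * (?Gx z / T + Lop a ?Gx z)) UNIV"
    unfolding pair[OF a lx ly] pair[OF a ly lx] by (simp add: mult_ac)
  also have "\<dots> = ?Gy x" by (simp add: green_eq[OF T a] infsum_delta)
  finally show ?thesis by simp
qed



lemma nonneg_sq: "0 \<le> (c::real) \<Longrightarrow> 0 \<le> c * d * d"
  by (metis mult.assoc mult_nonneg_nonneg zero_le_square)

lemma hess_pos:
  fixes a :: "'d::finite bond \<Rightarrow> real"
  assumes T: "T > 0" and a: "a \<in> Omega"
  shows "hessG T a b b > 0 \<and> 1 - a b * hessG T a b b > 0"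
proof -
  let ?Gy = "green T a (yb b)" and ?Gx = "green T a (xb b)"
  define g where "g = (\<lambda>z. ?Gy z - 1 * ?Gx z)"
  have lg: "l1 g" unfolding g_def by (intro l1_lin green_l1[OF T a])
  obtain Bg where Bg: "\<And>x. \<bar>g x\<bar> \<le> Bg" using l1_bdd[OF lg] by blast
  have geq: "g z / T + Lop a g z = wb b z" for z
    using green_eq[OF T a, of "yb b" z] green_eq[OF T a, of "xb b" z]
    unfolding g_def Lop_lin wb_def by (simp add: diff_divide_distrib)
  define H where "H = hessG T a b b"
  have H: "H = g (yb b) - g (xb b)" unfolding H_def hessG_def g_def by simp
  have sd1: "(\<lambda>z. g z * (if z = yb b then 1 else 0)) summable_on UNIV"
    by (rule sum_cmp[OF lg, of _ 1]) auto
  have sd2: "(\<lambda>z. g z * (if z = xb b then 1 else 0)) summable_on UNIV"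
    by (rule sum_cmp[OF lg, of _ 1]) auto
  have "infsum (\<lambda>z. g z * (g z / T + Lop a g z)) UNIV
      = infsum (\<lambda>z. g z * (if z = yb b then 1 else 0) - g z * (if z = xb b then 1 else 0)) UNIV"
    unfolding geq wb_def by (simp add: algebra_simps)
  also have "\<dots> = H" unfolding infsum_diff[OF sd1 sd2] infsum_delta H ..
  finally have HH: "H = infsum (\<lambda>z. g z * g z) UNIV / T
     + (\<Sum>i\<in>UNIV. infsum (\<lambda>x. a (x, i) * (g (x + unitv i) - g x) * (g (x + unitv i) - g x)) UNIV)"
    unfolding pair[OF a lg lg] by simp
  define I where "I i = infsum (\<lambda>x. a (x, i) * (g (x + unitv i) - g x) * (g (x + unitv i) - g x)) UNIV" for i
  have aa: "\<And>b. 0 \<le> a b \<and> a b \<le> 1" using OmegaD[OF a] by blast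
  have I0: "I i \<ge> 0" for i unfolding I_def
  proof (rule infsum_nonneg)
    fix x have "0 \<le> a (x, i)" using aa by simp
    from mult_nonneg_nonneg[OF this zero_le_square[of "g (x + unitv i) - g x"]]
    show "0 \<le> a (x, i) * (g (x + unitv i) - g x) * (g (x + unitv i) - g x)" by (simp add: mult.assoc)
  qed
  have sI: "(\<lambda>x. a (x, i) * (g (x + unitv i) - g x) * (g (x + unitv i) - g x)) summable_on UNIV" for i
  proof -
    have lw: "l1 (\<lambda>x. \<bar>g (x + unitv i)\<bar> + \<bar>g x\<bar>)" by (intro l1_add l1_abs lg l1_shift)
    show ?thesis
    proof (rule sum_cmp[OF lw, of _ "2 * Bg"])
      fix x
      have "\<bar>(g (x + unitv i) - g x) * (a (x, i) * (g (x + unitv i) - g x))\<bar> \<le> (2 * Bg) * \<bar>\<bar>g (x + unitv i)\<bar> + \<bar>g x\<bar>\<bar>"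
      proof (rule bnd3)
        have tri: "\<bar>g (x + unitv i) - g x\<bar> \<le> \<bar>g (x + unitv i)\<bar> + \<bar>g x\<bar>" by (rule abs_triangle_ineq4)
        thus "\<bar>g (x + unitv i) - g x\<bar> \<le> 2 * Bg" using Bg[of x] Bg[of "x + unitv i"] by linarith
        show "0 \<le> a (x, i)" "a (x, i) \<le> 1" using aa by auto
        show "\<bar>g (x + unitv i) - g x\<bar> \<le> \<bar>\<bar>g (x + unitv i)\<bar> + \<bar>g x\<bar>\<bar>" using tri by simp
      qed
      thus "\<bar>a (x, i) * (g (x + unitv i) - g x) * (g (x + unitv i) - g x)\<bar> \<le> 2 * Bg * \<bar>\<bar>g (x + unitv i)\<bar> + \<bar>g x\<bar>\<bar>"
        by (simp add: mult_ac)
    qed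
  qed
  have "I (snd b) \<ge> (\<Sum>x\<in>{fst b}. a (x, snd b) * (g (x + unitv (snd b)) - g x) * (g (x + unitv (snd b)) - g x))"
    unfolding I_def by (rule finite_sum_le_infsum[OF sI]) (use aa in \<open>auto intro: nonneg_sq\<close>)
  also have "(\<Sum>x\<in>{fst b}. a (x, snd b) * (g (x + unitv (snd b)) - g x) * (g (x + unitv (snd b)) - g x)) = a b * H * H"
    unfolding H by (simp add: yb_def xb_def)
  finally have Ib: "I (snd b) \<ge> a b * H * H" .
  have "(\<Sum>i\<in>UNIV. I i) \<ge> I (snd b)" by (rule member_le_sum) (auto simp: I0)
  with Ib have sumI: "(\<Sum>i\<in>UNIV. I i) \<ge> a b * H * H" by linarith
  have sgg: "(\<lambda>z. g z * g z) summable_on UNIV"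
  proof (rule sum_cmp[OF lg, of _ Bg])
    fix x have "\<bar>g x * g x\<bar> = \<bar>g x\<bar> * \<bar>g x\<bar>" by (simp add: abs_mult)
    also have "\<dots> \<le> Bg * \<bar>g x\<bar>" by (rule mult_right_mono[OF Bg]) simp
    finally show "\<bar>g x * g x\<bar> \<le> Bg * \<bar>g x\<bar>" .
  qed
  have key: "H \<ge> g z * g z / T + a b * H * H" for z
  proof -
    have "g z * g z \<le> infsum (\<lambda>z. g z * g z) UNIV"
      using finite_sum_le_infsum[OF sgg, of "{z}"] by simp
    hence "g z * g z / T \<le> infsum (\<lambda>z. g z * g z) UNIV / T" using T by (simp add: divide_right_mono)
    thus ?thesis using HH sumI unfolding I_def by linarith
  qed
  obtain z where gz: "g z \<noteq> 0"
  proof (rule ccontr)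
    assume "\<not> thesis"
    hence "\<forall>z. g z = 0" using that by blast
    hence "g = (\<lambda>z. 0)" by auto
    hence "wb b (yb b) = 0" using geq[of "yb b"] by (simp add: Lop_zero)
    thus False using yb_ne_xb[of b] by (simp add: wb_def)
  qed
  have "g z * g z > 0" using gz by (cases "g z > 0") (auto simp: mult_pos_pos mult_neg_neg)
  hence "g z * g z / T > 0" using T by (simp add: divide_pos_pos)
  with key[of z] have Hgt: "H > a b * H * H" by linarith
  have "a b * H * H \<ge> 0" using aa[of b] by (intro nonneg_sq) simp
  with Hgt have Hpos: "H > 0" by linarith
  have "(1 - a b * H) * H > 0" using Hgt by (simp add: algebra_simps)
  hence "1 - a b * H > 0" using Hpos by (simp add: zero_less_mult_iff)
  with Hpos show ?thesis unfolding H_def by simp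
qed

lemma den_pos:
  fixes a :: "'d::finite bond \<Rightarrow> real"
  assumes T: "T > 0" and a: "a \<in> Omega" and t: "t \<in> {0..1}"
  shows "1 + (t - a b) * hessG T a b b > 0"
proof -
  have h: "hessG T a b b > 0" "1 - a b * hessG T a b b > 0" using hess_pos[OF T a] by auto
  have "t * hessG T a b b \<ge> 0" using t h by simp
  thus ?thesis using h by (simp add: algebra_simps)
qed

lemma grad_hess: "grad (\<lambda>z. green T a (yb b) z - 1 * green T a (xb b) z) b = hessG T a b b"
  unfolding grad_def hessG_def by simp

lemma green_upd:
  fixes a :: "'d::finite bond \<Rightarrow> real"
  assumes T: "T > 0" and a: "a \<in> Omega" and t: "t \<in> {0..1}"
  shows "green T (a(b:=t)) y x = green T a y x - (t - a b) * (green T a (yb b) x - green T a (xb b) x)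
            * grad (green T a y) b / (1 + (t - a b) * hessG T a b b)"
proof -
  define \<delta> where "\<delta> = t - a b"
  define H where "H = hessG T a b b"
  define Gy where "Gy = green T a y"
  define g where "g = (\<lambda>z. green T a (yb b) z - 1 * green T a (xb b) z)"
  define \<kappa> where "\<kappa> = grad Gy b"
  define k where "k = \<delta> * \<kappa> / (1 + \<delta> * H)"
  have den: "1 + \<delta> * H > 0" unfolding \<delta>_def H_def by (rule den_pos[OF T a t])
  have kk: "k * (1 + \<delta> * H) = \<delta> * \<kappa>" unfolding k_def using den by simp
  have a': "a(b:=t) \<in> Omega" by (rule Omega_upd[OF a t])
  have lg: "l1 g" unfolding g_def by (intro l1_lin green_l1[OF T a])
  have lGy: "l1 Gy" unfolding Gy_def by (rule green_l1[OF T a])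
  have geq: "g z / T + Lop a g z = wb b z" for z
    using green_eq[OF T a, of "yb b" z] green_eq[OF T a, of "xb b" z]
    unfolding g_def Lop_lin wb_def by (simp add: diff_divide_distrib)
  have Gyeq: "Gy z / T + Lop a Gy z = (if z = y then 1 else 0)" for z
    unfolding Gy_def by (rule green_eq[OF T a])
  define C where "C = (\<lambda>z. Gy z - k * g z)"
  have lC: "l1 C" unfolding C_def by (intro l1_lin lGy lg)
  have gC: "grad C b = \<kappa> - k * H" unfolding C_def \<kappa>_def H_def hessG_def g_def grad_def by (simp add: algebra_simps)
  have Ceq: "C z / T + Lop (a(b:=t)) C z = (if z = y then 1 else 0)" for z
  proof -
    have "C z / T + Lop (a(b:=t)) C z = (Gy z / T + Lop a Gy z) - k * (g z / T + Lop a g z) + \<delta> * (\<kappa> - k * H) * wb b z"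
      unfolding Lop_upd gC unfolding C_def Lop_lin \<delta>_def by (simp add: algebra_simps diff_divide_distrib)
    also have "\<dots> = (if z = y then 1 else 0) + (\<delta> * \<kappa> - k * (1 + \<delta> * H)) * wb b z"
      unfolding Gyeq geq by (simp add: algebra_simps)
    also have "\<dots> = (if z = y then 1 else 0)" unfolding kk by simp
    finally show ?thesis .
  qed
  obtain B1 where B1: "\<And>x. \<bar>green T (a(b:=t)) y x\<bar> \<le> B1" using l1_bdd[OF green_l1[OF T a']] by blast
  obtain B2 where B2: "\<And>x. \<bar>C x\<bar> \<le> B2" using l1_bdd[OF lC] by blast
  have "green T (a(b:=t)) y x = C x"
    by (rule uniq[OF T a' B1 B2, where f="\<lambda>z. if z = y then 1 else 0"]) (auto simp: green_eq[OF T a'] Ceq)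
  also have "\<dots> = Gy x - \<delta> * (green T a (yb b) x - green T a (xb b) x) * \<kappa> / (1 + \<delta> * H)"
    unfolding C_def k_def g_def by simp
  finally show ?thesis unfolding \<delta>_def H_def Gy_def \<kappa>_def .
qed



lemma corr_split: "nabla_star (\<lambda>b'. a b' * (grad p b' + ebond e b')) x = Lop a p x + nabla_star (\<lambda>b'. a b' * ebond e b') x"
  unfolding Lop_def distrib_left by (rule nabla_star_add)

lemma phi_upd:
  fixes a :: "'d::finite bond \<Rightarrow> real" and phi :: "('d bond \<Rightarrow> real) \<Rightarrow> 'd point \<Rightarrow> real"
  assumes T: "T > 0" and a: "a \<in> Omega" and t: "t \<in> {0..1}" and corr: "is_mod_corrector T e phi"
  shows "phi (a(b:=t)) x = phi a x - (t - a b) * (grad (phi a) b + ebond e b)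
     * (green T a (yb b) x - green T a (xb b) x) / (1 + (t - a b) * hessG T a b b)"
proof -
  define \<delta> where "\<delta> = t - a b"
  define H where "H = hessG T a b b"
  define g where "g = (\<lambda>z. green T a (yb b) z - 1 * green T a (xb b) z)"
  define F where "F = grad (phi a) b + ebond e b"
  define k where "k = \<delta> * F / (1 + \<delta> * H)"
  define E where "E = (\<lambda>a' z. nabla_star (\<lambda>b'. a' b' * ebond e b') z)"
  have den: "1 + \<delta> * H > 0" unfolding \<delta>_def H_def by (rule den_pos[OF T a t])
  have kk: "k * (1 + \<delta> * H) = \<delta> * F" unfolding k_def using den by simp
  have a': "a(b:=t) \<in> Omega" by (rule Omega_upd[OF a t])
  have ceq: "\<And>a' z. a' \<in> Omega \<Longrightarrow> phi a' z / T + Lop a' (phi a') z = - E a' z"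
    using corr unfolding is_mod_corrector_def corr_split E_def by (simp add: eq_neg_iff_add_eq_0 add.assoc)
  have pb: "\<And>a'. a' \<in> Omega \<Longrightarrow> \<exists>B. \<forall>x. \<bar>phi a' x\<bar> \<le> B"
    using corr unfolding is_mod_corrector_def bounded_iff by auto
  have Eupd: "E (a(b:=t)) z = E a z + \<delta> * ebond e b * wb b z" for z
    unfolding E_def \<delta>_def by (rule nabla_star_upd)
  have lg: "l1 g" unfolding g_def by (intro l1_lin green_l1[OF T a])
  have geq: "g z / T + Lop a g z = wb b z" for z
    using green_eq[OF T a, of "yb b" z] green_eq[OF T a, of "xb b" z]
    unfolding g_def Lop_lin wb_def by (simp add: diff_divide_distrib)
  define P where "P = (\<lambda>z. phi a z - k * g z)"
  have gP: "grad P b = grad (phi a) b - k * H"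
    unfolding P_def H_def hessG_def g_def grad_def by (simp add: algebra_simps)
  have Peq: "P z / T + Lop (a(b:=t)) P z = - E (a(b:=t)) z" for z
  proof -
    have "P z / T + Lop (a(b:=t)) P z = (phi a z / T + Lop a (phi a) z) - k * (g z / T + Lop a g z) + \<delta> * (grad (phi a) b - k * H) * wb b z"
      unfolding Lop_upd gP unfolding P_def Lop_lin \<delta>_def by (simp add: algebra_simps diff_divide_distrib)
    also have "\<dots> = - E a z + (\<delta> * (grad (phi a) b + ebond e b) - k * (1 + \<delta> * H)) * wb b z - \<delta> * ebond e b * wb b z"
      unfolding ceq[OF a] geq by (simp add: algebra_simps)
    also have "\<dots> = - E (a(b:=t)) z" unfolding Eupd kk F_def by simp
    finally show ?thesis .
  qed
  obtain B1 where B1: "\<And>x. \<bar>phi (a(b:=t)) x\<bar> \<le> B1" using pb[OF a'] by blast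
  obtain B0 where B0: "\<And>x. \<bar>phi a x\<bar> \<le> B0" using pb[OF a] by blast
  obtain Bg where Bg: "\<And>x. \<bar>g x\<bar> \<le> Bg" using l1_bdd[OF lg] by blast
  have B2: "\<bar>P x\<bar> \<le> B0 + \<bar>k\<bar> * Bg" for x
  proof -
    have "\<bar>P x\<bar> \<le> \<bar>phi a x\<bar> + \<bar>k\<bar> * \<bar>g x\<bar>" unfolding P_def
      using abs_triangle_ineq4[of "phi a x" "k * g x"] by (simp add: abs_mult)
    also have "\<dots> \<le> B0 + \<bar>k\<bar> * Bg" using B0[of x] Bg[of x] by (intro add_mono mult_left_mono) auto
    finally show ?thesis .
  qed
  have "phi (a(b:=t)) x = P x"
    by (rule uniq[OF T a' B1 B2, where f="\<lambda>z. - E (a(b:=t)) z"]) (auto simp: ceq[OF a'] Peq)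
  also have "\<dots> = phi a x - \<delta> * F * (green T a (yb b) x - green T a (xb b) x) / (1 + \<delta> * H)"
    unfolding P_def k_def g_def by simp
  finally show ?thesis unfolding \<delta>_def H_def F_def .
qed



lemma deriv_within_cong:
  assumes "(f has_real_derivative D) (at s)" and "s \<in> {0..1::real}"
    and "\<And>t. t \<in> {0..1} \<Longrightarrow> f t = g t"
  shows "(g has_real_derivative D) (at s within {0..1})"
  by (rule has_field_derivative_transform_within[OF has_field_derivative_at_within[OF assms(1)], of 1])
     (use assms in auto)

lemma alg1:
  fixes A B C E P Q k d H D :: real
  assumes "D = 1 + d * H" "D \<noteq> 0" "H = A - B - C + E" "k = P - Q"
  shows "(P - d * (A - C) * k / D) - (Q - d * (B - E) * k / D) = k / D"
proof -
  have hA: "A = H + B + C - E" using assms(3) by simp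
  have "(P - d * (A - C) * k / D) - (Q - d * (B - E) * k / D) = (P - Q) - d * H * k / D"
    using assms(2) by (simp add: hA field_simps)
  also have "\<dots> = k * (D - d * H) / D" using assms(2) by (simp add: assms(4) field_simps)
  also have "\<dots> = k / D" using assms(1) by simp
  finally show ?thesis .
qed

lemma alg2:
  fixes A B C E P Q F d H D e :: real
  assumes "D = 1 + d * H" "D \<noteq> 0" "H = A - B - C + E" "F = P - Q + e"
  shows "(P - d * F * (A - C) / D) - (Q - d * F * (B - E) / D) + e = F / D"
proof -
  have hA: "A = H + B + C - E" using assms(3) by simp
  have "(P - d * F * (A - C) / D) - (Q - d * F * (B - E) / D) + e = F - d * F * H / D"
    using assms(2) by (simp add: hA assms(4) field_simps)
  also have "\<dots> = F * (D - d * H) / D" using assms(2) by (simp add: field_simps)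
  also have "\<dots> = F / D" using assms(1) by simp
  finally show ?thesis .
qed

lemma alg3:
  fixes A B C E ky kx d H D :: real
  assumes "D = 1 + d * H" "D \<noteq> 0" "H = A - B - C + E" "ky = A - B" "kx = C - E"
  shows "(A - d * (A - C) * ky / D) - (B - d * (B - E) * ky / D) - (C - d * (A - C) * kx / D)
     + (E - d * (B - E) * kx / D) = H / D"
proof -
  have hA: "A = H + B + C - E" using assms(3) by simp
  have "(A - d * (A - C) * ky / D) - (B - d * (B - E) * ky / D) - (C - d * (A - C) * kx / D)
     + (E - d * (B - E) * kx / D) = H - d * H * H / D"
    using assms(2) by (simp add: hA assms(4,5) field_simps)
  also have "\<dots> = H * (D - d * H) / D" using assms(2) by (simp add: field_simps)
  also have "\<dots> = H / D" using assms(1) by simp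
  finally show ?thesis .
qed

theorem lemma7:
  fixes T :: real and e :: "real ^ 'd::finite" and b :: "'d bond"
    and phi :: "('d bond \<Rightarrow> real) \<Rightarrow> 'd point \<Rightarrow> real"
  assumes "T > 0" and "norm e = 1" and "is_mod_corrector T e phi"
  shows "\<forall>a\<in>Omega.
     ((\<lambda>t. phi (a(b := t)) 0) has_real_derivative
        (- gradG T a b * (grad (phi a) b + ebond e b))) (at (a b) within {0..1})
   \<and> ((\<lambda>t. - gradG T (a(b := t)) b * (grad (phi (a(b := t))) b + ebond e b))
        has_real_derivative
        (- 2 * hessG T a b b * (- gradG T a b * (grad (phi a) b + ebond e b))))
        (at (a b) within {0..1})
   \<and> ((\<lambda>t. hessG T (a(b := t)) b b) has_real_derivative (- (hessG T a b b)\<^sup>2))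
        (at (a b) within {0..1})
   \<and> hessG T a b b > 0
   \<and> 1 - a b * hessG T a b b > 0"
proof
  fix a :: "'d bond \<Rightarrow> real" assume a: "a \<in> Omega"
  have T: "T > 0" by fact
  have corr: "is_mod_corrector T e phi" by fact
  define s where "s = a b"
  define H where "H = hessG T a b b"
  define \<gamma> where "\<gamma> = gradG T a b"
  define F where "F = grad (phi a) b + ebond e b"
  define p0 where "p0 = phi a 0"
  have hp: "H > 0" "1 - s * H > 0" using hess_pos[OF T a] unfolding H_def s_def by auto
  have s01: "s \<in> {0..1}" using OmegaD[OF a, of b] unfolding s_def by auto
  have D: "1 + (t - s) * H > 0" if "t \<in> {0..1}" for t
    using den_pos[OF T a that] unfolding s_def H_def .
  have gam: "\<gamma> = green T a 0 (yb b) - green T a 0 (xb b)" unfolding \<gamma>_def gradG_def grad_def ..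
  have gyx: "green T a (yb b) (yb b) - green T a (xb b) (yb b) - (green T a (yb b) (xb b) - green T a (xb b) (xb b)) = H"
    unfolding H_def hessG_def by simp
  have f1: "phi (a(b:=t)) 0 = p0 - (t - s) * F * \<gamma> / (1 + (t - s) * H)" if t: "t \<in> {0..1}" for t
    unfolding phi_upd[OF T a t corr] p0_def F_def s_def H_def gam
    by (simp add: green_sym[OF T a, of _ 0])
  have f2: "- gradG T (a(b:=t)) b * (grad (phi (a(b:=t))) b + ebond e b) = - \<gamma> * F / (1 + (t - s) * H)^2"
    if t: "t \<in> {0..1}" for t
  proof -
    have Dn: "1 + (t - a b) * hessG T a b b \<noteq> 0" using D[OF t] unfolding s_def H_def by simp
    have "gradG T (a(b:=t)) b = green T (a(b:=t)) 0 (yb b) - green T (a(b:=t)) 0 (xb b)"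
      by (simp add: gradG_def grad_def)
    also have "\<dots> = (green T a 0 (yb b) - (t - a b) * (green T a (yb b) (yb b) - green T a (xb b) (yb b)) * grad (green T a 0) b / (1 + (t - a b) * hessG T a b b))
       - (green T a 0 (xb b) - (t - a b) * (green T a (yb b) (xb b) - green T a (xb b) (xb b)) * grad (green T a 0) b / (1 + (t - a b) * hessG T a b b))"
      using green_upd[OF T a t, where b=b and y=0 and x="yb b"] green_upd[OF T a t, where b=b and y=0 and x="xb b"] by simp
    also have "\<dots> = grad (green T a 0) b / (1 + (t - a b) * hessG T a b b)"
      by (rule alg1[OF refl Dn]) (simp_all add: hessG_def grad_def)
    finally have g1: "gradG T (a(b:=t)) b = \<gamma> / (1 + (t - s) * H)"
      unfolding \<gamma>_def gradG_def s_def H_def .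
    have "grad (phi (a(b:=t))) b + ebond e b = phi (a(b:=t)) (yb b) - phi (a(b:=t)) (xb b) + ebond e b"
      by (simp add: grad_def)
    also have "\<dots> = (phi a (yb b) - (t - a b) * F * (green T a (yb b) (yb b) - green T a (xb b) (yb b)) / (1 + (t - a b) * hessG T a b b))
       - (phi a (xb b) - (t - a b) * F * (green T a (yb b) (xb b) - green T a (xb b) (xb b)) / (1 + (t - a b) * hessG T a b b)) + ebond e b"
      using phi_upd[OF T a t corr, where b=b and x="yb b"] phi_upd[OF T a t corr, where b=b and x="xb b"] unfolding F_def by simp
    also have "\<dots> = F / (1 + (t - a b) * hessG T a b b)"
      by (rule alg2[OF refl Dn]) (simp_all add: hessG_def grad_def F_def)
    finally have g2: "grad (phi (a(b:=t))) b + ebond e b = F / (1 + (t - s) * H)"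
      unfolding s_def H_def .
    show ?thesis unfolding g1 g2 by (simp add: power2_eq_square)
  qed
  have f3: "hessG T (a(b:=t)) b b = H / (1 + (t - s) * H)" if t: "t \<in> {0..1}" for t
  proof -
    have Dn: "1 + (t - a b) * hessG T a b b \<noteq> 0" using D[OF t] unfolding s_def H_def by simp
    have "hessG T (a(b:=t)) b b = green T (a(b:=t)) (yb b) (yb b) - green T (a(b:=t)) (yb b) (xb b)
        - green T (a(b:=t)) (xb b) (yb b) + green T (a(b:=t)) (xb b) (xb b)"
      by (simp add: hessG_def)
    also have "\<dots> = (green T a (yb b) (yb b) - (t - a b) * (green T a (yb b) (yb b) - green T a (xb b) (yb b)) * grad (green T a (yb b)) b / (1 + (t - a b) * hessG T a b b))
       - (green T a (yb b) (xb b) - (t - a b) * (green T a (yb b) (xb b) - green T a (xb b) (xb b)) * grad (green T a (yb b)) b / (1 + (t - a b) * hessG T a b b))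
       - (green T a (xb b) (yb b) - (t - a b) * (green T a (yb b) (yb b) - green T a (xb b) (yb b)) * grad (green T a (xb b)) b / (1 + (t - a b) * hessG T a b b))
       + (green T a (xb b) (xb b) - (t - a b) * (green T a (yb b) (xb b) - green T a (xb b) (xb b)) * grad (green T a (xb b)) b / (1 + (t - a b) * hessG T a b b))"
      using green_upd[OF T a t, where b=b and y="yb b" and x="yb b"] green_upd[OF T a t, where b=b and y="yb b" and x="xb b"]
        green_upd[OF T a t, where b=b and y="xb b" and x="yb b"] green_upd[OF T a t, where b=b and y="xb b" and x="xb b"] by simp
    also have "\<dots> = hessG T a b b / (1 + (t - a b) * hessG T a b b)"
      by (rule alg3[OF refl Dn]) (simp_all add: hessG_def grad_def)
    finally show ?thesis unfolding s_def H_def .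
  qed
  have d1: "((\<lambda>t. p0 - (t - s) * F * \<gamma> / (1 + (t - s) * H)) has_real_derivative (- \<gamma> * F)) (at s)"
    by (auto intro!: derivative_eq_intros)
  have d2: "((\<lambda>t. - \<gamma> * F / (1 + (t - s) * H)^2) has_real_derivative (- 2 * H * (- \<gamma> * F))) (at s)"
    by (auto intro!: derivative_eq_intros)
  have d3: "((\<lambda>t. H / (1 + (t - s) * H)) has_real_derivative (- H\<^sup>2)) (at s)"
    by (auto intro!: derivative_eq_intros simp: power2_eq_square)
  show "((\<lambda>t. phi (a(b := t)) 0) has_real_derivative
        (- gradG T a b * (grad (phi a) b + ebond e b))) (at (a b) within {0..1})
   \<and> ((\<lambda>t. - gradG T (a(b := t)) b * (grad (phi (a(b := t))) b + ebond e b))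
        has_real_derivative
        (- 2 * hessG T a b b * (- gradG T a b * (grad (phi a) b + ebond e b))))
        (at (a b) within {0..1})
   \<and> ((\<lambda>t. hessG T (a(b := t)) b b) has_real_derivative (- (hessG T a b b)\<^sup>2))
        (at (a b) within {0..1})
   \<and> hessG T a b b > 0
   \<and> 1 - a b * hessG T a b b > 0"
    unfolding s_def[symmetric] H_def[symmetric] \<gamma>_def[symmetric] F_def[symmetric]
    using deriv_within_cong[OF d1 s01, of "\<lambda>t. phi (a(b := t)) 0"] f1
      deriv_within_cong[OF d2 s01, of "\<lambda>t. - gradG T (a(b := t)) b * (grad (phi (a(b := t))) b + ebond e b)"] f2
      deriv_within_cong[OF d3 s01, of "\<lambda>t. hessG T (a(b := t)) b b"] f3 hp
    by auto
qed


end
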